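(* Assume $\beta>1$ and $0<\omega_i^{\min}\le\omega_i^k\le\omega_i^{\max}<\infty$ ($i\le N-1$), $0<\nu_i^{\min}\le\nu_i^k\le\nu_i^{\max}<\infty$ ($i\le N-2$) for all $k\ge0$. Then the iterates of the 2-splitting proximal point ADMM are bounded: there exist constants $\mathcal{W}_i^{\max},\mathcal{V}_i^{\max},\lambda^{\max}>0$ such that $\|W_i^k\|_F\le\mathcal{W}_i^{\max}$, $\|V_i^k\|_F\le\mathcal{V}_i^{\max}$ ($i=1,\dots,N$) and $\|\Lambda^k\|_F\le\lambda^{\max}$ for all $k\ge0$.
   Context: Data $X\in\mathbb{R}^{d\times n}$, $Y\in\mathbb{R}^{q\times n}$, integer $N\ge3$, parameters $\lambda,\mu>0$, $\beta>0$. Activations $\sigma_i:\mathbb{R}\to\mathbb{R}$ ($i\le N-1$) real analytic with $|\sigma_i|\le\psi_0,|\sigma_i'|\le\psi_1,|\sigma_i''|\le\psi_2$ on $\mathbb{R}$, applied entrywise to matrices. $\|\cdot\|_F$ Frobenius norm, $\langle A,B\rangle=\mathrm{tr}(AB^T)$. $V_0:=X$ always. Variables $W_i\in\mathbb{R}^{d\times d}$ ($i\le N-1$), $W_N\in\mathbb{R}^{q\times d}$, $V_i\in\mathbb{R}^{d\times n}$ ($1\le i\le N-1$), $V_N,\Lambda\in\mathbb{R}^{q\times n}$. Augmented Lagrangian: $\mathcal{L}_\beta^{2s}(\{W_i\},\{V_i\},\Lambda)=\tfrac12\|V_N-Y\|_F^2+\tfrac\lambda2\sum_{i=1}^N\|W_i\|_F^2+\tfrac\mu2\sum_{i=1}^{N-1}\|V_{i-1}+\sigma_i(W_iV_{i-1})-V_i\|_F^2+\langle\Lambda,W_NV_{N-1}-V_N\rangle+\tfrac\beta2\|W_NV_{N-1}-V_N\|_F^2$.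 2-splitting proximal point ADMM: given arbitrary $W_i^0$, set $V_i^0=V_{i-1}^0+\sigma_i(W_i^0V_{i-1}^0)$ ($i\le N-1$), $V_N^0=W_N^0V_{N-1}^0$, $\Lambda^0=O$, and positive parameters $\omega_i^{k}$ ($i\le N-1$), $\nu_i^{k}$ ($i\le N-2$). For $k\ge1$: (a) $W_N^k=\arg\min_{W_N}\{\tfrac\lambda2\|W_N\|_F^2+\tfrac\beta2\|W_NV_{N-1}^{k-1}-V_N^{k-1}+\Lambda^{k-1}/\beta\|_F^2\}$; (b) for $i=N-1,\dots,1$: $W_i^k$ is a (fixed) minimizer of $\tfrac\lambda2\|W_i\|_F^2+\tfrac\mu2\|V_{i-1}^{k-1}+\sigma_i(W_iV_{i-1}^{k-1})-V_i^{k-1}\|_F^2+\tfrac{\omega_i^{k-1}}2\|W_i-W_i^{k-1}\|_F^2$; (c) for $i=1,\dots,N-2$: $V_i^k$ is a (fixed) minimizer of $\tfrac\mu2\|V_{i-1}^k+\sigma_i(W_i^kV_{i-1}^k)-V_i\|_F^2+\tfrac\mu2\|V_i+\sigma_{i+1}(W_{i+1}^kV_i)-V_{i+1}^{k-1}\|_F^2+\tfrac{\nu_i^{k-1}}2\|V_i-V_i^{k-1}\|_F^2$; (d) $V_{N-1}^k=\arg\min\{\tfrac\mu2\|V_{N-2}^k+\sigma_{N-1}(W_{N-1}^kV_{N-2}^k)-V_{N-1}\|_F^2+\tfrac\beta2\|W_N^kV_{N-1}-V_N^{k-1}+\Lambda^{k-1}/\beta\|_F^2\}$; (e) $V_N^k=\frac{1}{1+\beta}(Y+\beta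 W_N^kV_{N-1}^k+\Lambda^{k-1})$; (f) $\Lambda^k=\Lambda^{k-1}+\beta(W_N^kV_{N-1}^k-V_N^k)$. *)

theory Defs
  imports "HOL-Analysis.Analysis"
begin

text \<open>Matrices are rendered as real^'c^'r (r rows, c columns). For such matrices
  the library norm is the Frobenius norm, and ** is the matrix product.\<close>

definition entrywise :: "(real \<Rightarrow> real) \<Rightarrow> real^'c^'r \<Rightarrow> real^'c^'r" where
  "entrywise f M = (\<chi> i j. f (M $ i $ j))"

definition real_analytic :: "(real \<Rightarrow> real) \<Rightarrow> bool" where
  "real_analytic f \<longleftrightarrow>
     (\<forall>x. \<exists>r>0. \<exists>c::nat \<Rightarrow> real. \<forall>y. \<bar>y - x\<bar> < r \<longrightarrow> (\<lambda>k. c k * (y - x) ^ k) sums f y)"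

end

theory Submission
  imports Defs
begin

lemma max_norm_pos: "0 < max a (norm (z::'a::real_normed_vector)) + (1::real)"
proof -
  have "0 \<le> max a (norm z)" using norm_ge_zero[of z] max.cobounded2[of "norm z" a] by linarith
  then show ?thesis by simp
qed

lemma le_mp1: "(x::real) \<le> max a x + 1" by simp
lemma le_mp2: "(x::real) \<le> a \<Longrightarrow> x \<le> max a y + 1" by simp

lemma sq_add: "(norm (a + b))^2 = (norm a)^2 + 2 * inner a b + (norm (b::'a::real_inner))^2"
  by (simp add: power2_norm_eq_inner inner_add_left inner_add_right inner_commute)

lemma sq_diff: "(norm (a - b))^2 = (norm a)^2 - 2 * inner a b + (norm (b::'a::real_inner))^2"
  by (simp add: power2_norm_eq_inner inner_diff_left inner_diff_right inner_commute)

lemma entry_bound: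
  fixes M :: "real^'c^'r"
  assumes "\<forall>x. \<bar>f x\<bar> \<le> p"
  shows "norm (entrywise f M) \<le> real CARD('r) * real CARD('c) * p"
proof -
  have row: "norm (entrywise f M $ i) \<le> real CARD('c) * p" for i
  proof -
    have "norm (entrywise f M $ i) \<le> (\<Sum>j\<in>UNIV. \<bar>entrywise f M $ i $ j\<bar>)"
      by (rule norm_le_l1_cart)
    also have "\<dots> \<le> (\<Sum>j\<in>(UNIV::'c set). p)"
      by (rule sum_mono) (simp add: entrywise_def assms)
    finally show ?thesis by simp
  qed
  have "norm (entrywise f M) \<le> (\<Sum>i\<in>UNIV. norm (entrywise f M $ i))"
    by (simp add: norm_vec_def L2_set_le_sum)
  also have "\<dots> \<le> (\<Sum>i\<in>(UNIV::'r set). real CARD('c) * p)"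
    by (rule sum_mono) (rule row)
  finally show ?thesis by (simp add: mult.assoc)
qed

lemma quad_id:
  fixes l x :: "'a::real_inner"
  assumes "beta > 0"
  shows "inner l x + beta/2 * (norm x)^2 = beta/2 * (norm (x + (1/beta) *\<^sub>R l))^2 - (norm l)^2/(2*beta)"
proof -
  have "(norm (x + (1/beta) *\<^sub>R l))^2 = (norm x)^2 + 2*(1/beta)*inner x l + (1/beta)^2*(norm l)^2"
    by (simp add: sq_add power_mult_distrib power_divide)
  then show ?thesis using assms by (simp add: field_simps power2_eq_square inner_commute)
qed

lemma lb_id:
  fixes l x :: "'a::real_inner"
  shows "1/2*(norm l)^2 + inner l x + beta/2*(norm x)^2 = 1/2*(norm (l+x))^2 + (beta-1)/2*(norm x)^2"
  by (simp add: sq_add inner_commute field_simps)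

lemma g_id:
  fixes u v Y Z l :: "'a::real_inner"
  assumes e: "(1+beta) *\<^sub>R u = Y + beta *\<^sub>R Z + l" and b: "beta > 0"
  shows "1/2*(norm (v - Y))^2 + beta/2*(norm (Z - v + (1/beta) *\<^sub>R l))^2
       = 1/2*(norm (u - Y))^2 + beta/2*(norm (Z - u + (1/beta) *\<^sub>R l))^2 + (1+beta)/2*(norm (v - u))^2"
proof -
  define h where "h = v - u"
  define p where "p = u - Y"
  define q where "q = Z - u + (1/beta) *\<^sub>R l"
  have 1: "v - Y = p + h" by (simp add: h_def p_def)
  have 2: "Z - v + (1/beta) *\<^sub>R l = q - h" by (simp add: h_def q_def)
  have z: "p - beta *\<^sub>R q = 0"
  proof -
    have "p - beta *\<^sub>R q = (1+beta) *\<^sub>R u - (Y + beta *\<^sub>R Z + l)"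
      using b by (simp add: algebra_simps p_def q_def)
    then show ?thesis using e by simp
  qed
  have c: "inner p h - beta * inner q h = 0"
    using arg_cong[OF z, of "\<lambda>w. inner w h"] by (simp add: inner_diff_left)
  have A: "(norm (p + h))^2 = (norm p)^2 + 2 * inner p h + (norm h)^2" by (rule sq_add)
  have B: "(norm (q - h))^2 = (norm q)^2 - 2 * inner q h + (norm h)^2" by (rule sq_diff)
  show ?thesis unfolding 1 2 h_def[symmetric] p_def[symmetric] q_def[symmetric] A B
    using c by (simp add: algebra_simps)
qed


theorem mainTheorem5:
  fixes X :: "real^'n^'d" and Y :: "real^'n^'q"
    and N :: nat and lam mu beta psi0 psi1 psi2 :: real
    and sigma :: "nat \<Rightarrow> real \<Rightarrow> real"
    and W :: "nat \<Rightarrow> nat \<Rightarrow> real^'d^'d"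
    and WN :: "nat \<Rightarrow> real^'d^'q"
    and V :: "nat \<Rightarrow> nat \<Rightarrow> real^'n^'d"
    and VN Lam :: "nat \<Rightarrow> real^'n^'q"
    and omega nu :: "nat \<Rightarrow> nat \<Rightarrow> real"
    and omin omax numin numax :: "nat \<Rightarrow> real"
  assumes N: "N \<ge> 3" and lam: "lam > 0" and mu: "mu > 0" and beta: "beta > 1"
    and act: "\<forall>i\<in>{1..N-1}. real_analytic (sigma i) \<and>
               (\<forall>x. \<bar>sigma i x\<bar> \<le> psi0 \<and> \<bar>deriv (sigma i) x\<bar> \<le> psi1
                    \<and> \<bar>deriv (deriv (sigma i)) x\<bar> \<le> psi2)"
    and om: "\<forall>i\<in>{1..N-1}. 0 < omin i \<and> omin i \<le> omax i \<and>
               (\<forall>k. omin i \<le> omega k i \<and> omega k i \<le> omax i)"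
    and nu: "\<forall>i\<in>{1..N-2}. 0 < numin i \<and> numin i \<le> numax i \<and>
               (\<forall>k. numin i \<le> nu k i \<and> nu k i \<le> numax i)"
    and V0: "\<forall>k. V k 0 = X"
    and init_V: "\<forall>i\<in>{1..N-1}. V 0 i = V 0 (i-1) + entrywise (sigma i) (W 0 i ** V 0 (i-1))"
    and init_VN: "VN 0 = WN 0 ** V 0 (N-1)"
    and init_Lam: "Lam 0 = 0"
    and step_a: "\<forall>k\<ge>1. \<forall>Wn.
        lam/2 * (norm (WN k))^2
          + beta/2 * (norm (WN k ** V (k-1) (N-1) - VN (k-1) + (1/beta) *\<^sub>R Lam (k-1)))^2
        \<le> lam/2 * (norm Wn)^2
          + beta/2 * (norm (Wn ** V (k-1) (N-1) - VN (k-1) + (1/beta) *\<^sub>R Lam (k-1)))^2"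
    and step_b: "\<forall>k\<ge>1. \<forall>i\<in>{1..N-1}. \<forall>Wi.
        lam/2 * (norm (W k i))^2
          + mu/2 * (norm (V (k-1) (i-1) + entrywise (sigma i) (W k i ** V (k-1) (i-1)) - V (k-1) i))^2
          + omega (k-1) i / 2 * (norm (W k i - W (k-1) i))^2
        \<le> lam/2 * (norm Wi)^2
          + mu/2 * (norm (V (k-1) (i-1) + entrywise (sigma i) (Wi ** V (k-1) (i-1)) - V (k-1) i))^2
          + omega (k-1) i / 2 * (norm (Wi - W (k-1) i))^2"
    and step_c: "\<forall>k\<ge>1. \<forall>i\<in>{1..N-2}. \<forall>Vi.
        mu/2 * (norm (V k (i-1) + entrywise (sigma i) (W k i ** V k (i-1)) - V k i))^2
          + mu/2 * (norm (V k i + entrywise (sigma (i+1)) (W k (i+1) ** V k i) - V (k-1) (i+1)))^2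
          + nu (k-1) i / 2 * (norm (V k i - V (k-1) i))^2
        \<le> mu/2 * (norm (V k (i-1) + entrywise (sigma i) (W k i ** V k (i-1)) - Vi))^2
          + mu/2 * (norm (Vi + entrywise (sigma (i+1)) (W k (i+1) ** Vi) - V (k-1) (i+1)))^2
          + nu (k-1) i / 2 * (norm (Vi - V (k-1) i))^2"
    and step_d: "\<forall>k\<ge>1. \<forall>Vv.
        mu/2 * (norm (V k (N-2) + entrywise (sigma (N-1)) (W k (N-1) ** V k (N-2)) - V k (N-1)))^2
          + beta/2 * (norm (WN k ** V k (N-1) - VN (k-1) + (1/beta) *\<^sub>R Lam (k-1)))^2
        \<le> mu/2 * (norm (V k (N-2) + entrywise (sigma (N-1)) (W k (N-1) ** V k (N-2)) - Vv))^2
          + beta/2 * (norm (WN k ** Vv - VN (k-1) + (1/beta) *\<^sub>R Lam (k-1)))^2"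
    and step_e: "\<forall>k\<ge>1. VN k = (1/(1+beta)) *\<^sub>R (Y + beta *\<^sub>R (WN k ** V k (N-1)) + Lam (k-1))"
    and step_f: "\<forall>k\<ge>1. Lam k = Lam (k-1) + beta *\<^sub>R (WN k ** V k (N-1) - VN k)"
  shows "\<exists>Wmax Vmax :: nat \<Rightarrow> real. \<exists>lmax :: real.
           (\<forall>i\<in>{1..N}. Wmax i > 0 \<and> Vmax i > 0) \<and> lmax > 0 \<and>
           (\<forall>k. (\<forall>i\<in>{1..N-1}. norm (W k i) \<le> Wmax i \<and> norm (V k i) \<le> Vmax i)
                \<and> norm (WN k) \<le> Wmax N \<and> norm (VN k) \<le> Vmax N
                \<and> norm (Lam k) \<le> lmax)"
  
proof -
  have om0: "omega k i \<ge> 0" if "i \<in> {1..N-1}" for k i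
  proof -
    have "0 < omin i \<and> omin i \<le> omega k i" using om that by blast
    then show ?thesis by linarith
  qed
  have nu0: "nu k i \<ge> 0" if "i \<in> {1..N-2}" for k i
  proof -
    have "0 < numin i \<and> numin i \<le> nu k i" using nu that by blast
    then show ?thesis by linarith
  qed
  have b0: "beta > 0" using beta by simp
  define Tm :: "nat \<Rightarrow> real^'d^'d \<Rightarrow> real^'n^'d \<Rightarrow> real^'n^'d \<Rightarrow> real" where
    "Tm = (\<lambda>i Wi Vp Vi. (norm (Vp + entrywise (sigma i) (Wi ** Vp) - Vi))^2)"
  define D where "D = (\<lambda>k. WN k ** V k (N-1) - VN k)"
  define L where "L = (\<lambda>k. 1/2*(norm (VN k - Y))^2 + lam/2*(\<Sum>i\<in>{1..N-1}. (norm (W k i))^2)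
     + lam/2*(norm (WN k))^2 + mu/2*(\<Sum>i\<in>{1..N-1}. Tm i (W k i) (V k (i-1)) (V k i))
     + inner (Lam k) (D k) + beta/2*(norm (D k))^2)"
  have LamVN: "Lam k = VN k - Y" if k1: "k \<ge> 1" for k
  proof -
    have e: "VN k = (1/(1+beta)) *\<^sub>R (Y + beta *\<^sub>R (WN k ** V k (N-1)) + Lam (k-1))"
      using step_e k1 by blast
    have e2: "(1+beta) *\<^sub>R VN k = Y + beta *\<^sub>R (WN k ** V k (N-1)) + Lam (k-1)"
      using b0 by (simp add: e)
    have f: "Lam k = Lam (k-1) + beta *\<^sub>R (WN k ** V k (N-1)) - beta *\<^sub>R VN k"
      using step_f k1 by (simp add: scaleR_diff_right)
    have "Lam k = (1+beta) *\<^sub>R VN k - Y - beta *\<^sub>R VN k" using f e2 by (simp add: algebra_simps)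
    then show ?thesis by (simp add: algebra_simps)
  qed
  have desc: "L (Suc m) \<le> L m" if m1: "m \<ge> 1" for m
  proof -
    have s1: "1 \<le> Suc m" by simp
    have km: "Suc m - 1 = m" by simp
    define a where "a = (\<lambda>i. Tm i (W (Suc m) i) (V (Suc m) (i-1)) (V (Suc m) i))"
    define b where "b = (\<lambda>i. Tm i (W (Suc m) i) (V (Suc m) (i-1)) (V m i))"
    define c where "c = (\<lambda>i. Tm i (W (Suc m) i) (V m (i-1)) (V m i))"
    define P where "P = (\<lambda>v. beta/2*(norm (WN (Suc m) ** v - VN m + (1/beta) *\<^sub>R Lam m))^2)"
    have sa: "lam/2*(norm (WN (Suc m)))^2 + P (V m (N-1))
        \<le> lam/2*(norm (WN m))^2 + beta/2*(norm (WN m ** V m (N-1) - VN m + (1/beta) *\<^sub>R Lam m))^2"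
      using step_a[rule_format, OF s1, of "WN m", unfolded km] unfolding P_def by simp
    have sbi: "lam/2*(norm (W (Suc m) i))^2 + mu/2 * c i
        \<le> lam/2*(norm (W m i))^2 + mu/2 * Tm i (W m i) (V m (i-1)) (V m i)" if hi: "i \<in> {1..N-1}" for i
    proof -
      note h = step_b[rule_format, OF s1 hi, of "W m i", unfolded km]
      have "0 \<le> omega m i / 2 * (norm (W (Suc m) i - W m i))^2" using om0[OF hi] by simp
      then show ?thesis using h unfolding c_def Tm_def by simp
    qed
    have sb: "lam/2*(\<Sum>i\<in>{1..N-1}. (norm (W (Suc m) i))^2) + mu/2*(\<Sum>i\<in>{1..N-1}. c i)
        \<le> lam/2*(\<Sum>i\<in>{1..N-1}. (norm (W m i))^2) + mu/2*(\<Sum>i\<in>{1..N-1}. Tm i (W m i) (V m (i-1)) (V m i))"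
    proof -
      have "(\<Sum>i\<in>{1..N-1}. lam/2*(norm (W (Suc m) i))^2 + mu/2 * c i)
          \<le> (\<Sum>i\<in>{1..N-1}. lam/2*(norm (W m i))^2 + mu/2 * Tm i (W m i) (V m (i-1)) (V m i))"
        by (rule sum_mono) (rule sbi)
      then show ?thesis by (simp add: sum.distrib sum_distrib_left)
    qed
    have sci: "a i + b (i+1) \<le> b i + c (i+1)" if hi: "i \<in> {1..N-2}" for i
    proof -
      note h = step_c[rule_format, OF s1 hi, of "V m i", unfolded km]
      have "0 \<le> nu m i / 2 * (norm (V (Suc m) i - V m i))^2" using nu0[OF hi] by simp
      then have "mu/2 * a i + mu/2 * b (i+1) \<le> mu/2 * b i + mu/2 * c (i+1)"
        using h unfolding a_def b_def c_def Tm_def by simp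
      then have "mu * (a i + b (i+1)) \<le> mu * (b i + c (i+1))" by (simp add: algebra_simps)
      then show ?thesis using mu mult_le_cancel_left_pos by blast
    qed
    have tel: "j \<le> N-2 \<longrightarrow> (\<Sum>i\<in>{1..j}. a i) + b (j+1) \<le> (\<Sum>i\<in>{1..j+1}. c i)" for j
    proof (induction j)
      case 0
      then show ?case using V0 by (simp add: b_def c_def)
    next
      case (Suc j)
      show ?case
      proof
        assume hj: "Suc j \<le> N-2"
        then have "Suc j \<in> {1..N-2}" by simp
        from sci[OF this] Suc.IH hj show "(\<Sum>i\<in>{1..Suc j}. a i) + b (Suc j+1) \<le> (\<Sum>i\<in>{1..Suc j+1}. c i)"
          by simp
      qed
    qed
    have N21: "N - 2 + 1 = N - 1" using N by simp
    have tel2: "(\<Sum>i\<in>{1..N-2}. a i) + b (N-1) \<le> (\<Sum>i\<in>{1..N-1}. c i)"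
      using tel[of "N-2"] unfolding N21 by simp
    have sd0: "mu/2 * a (N-1) + P (V (Suc m) (N-1)) \<le> mu/2 * b (N-1) + P (V m (N-1))"
    proof -
      have NN: "N - 1 - 1 = N - 2" by simp
      show ?thesis using step_d[rule_format, OF s1, of "V m (N-1)", unfolded km]
        unfolding a_def b_def Tm_def P_def NN by simp
    qed
    have sumA: "(\<Sum>i\<in>{1..N-1}. a i) = (\<Sum>i\<in>{1..N-2}. a i) + a (N-1)"
    proof -
      have "N - 1 = Suc (N-2)" using N by simp
      then show ?thesis by simp
    qed
    have sc: "mu/2*(\<Sum>i\<in>{1..N-1}. a i) + P (V (Suc m) (N-1)) \<le> mu/2*(\<Sum>i\<in>{1..N-1}. c i) + P (V m (N-1))"
    proof -
      have "mu/2*(\<Sum>i\<in>{1..N-2}. a i) + mu/2 * b (N-1) \<le> mu/2*(\<Sum>i\<in>{1..N-1}. c i)"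
        using tel2 mu by (simp add: distrib_left[symmetric])
      then show ?thesis using sd0 unfolding sumA by (simp add: distrib_left)
    qed
    have LS: "Lam (Suc m) = VN (Suc m) - Y" "Lam m = VN m - Y" using LamVN m1 by auto
    have e2: "(1+beta) *\<^sub>R VN (Suc m) = Y + beta *\<^sub>R (WN (Suc m) ** V (Suc m) (N-1)) + Lam m"
      using step_e[rule_format, OF s1, unfolded km] b0 by simp
    have ge: "1/2*(norm (VN m - Y))^2 + P (V (Suc m) (N-1))
       = 1/2*(norm (VN (Suc m) - Y))^2 + beta/2*(norm (WN (Suc m) ** V (Suc m) (N-1) - VN (Suc m) + (1/beta) *\<^sub>R Lam m))^2
         + (1+beta)/2*(norm (VN m - VN (Suc m)))^2"
      unfolding P_def by (rule g_id[OF e2 b0])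
    have Dk: "D (Suc m) = (1/beta) *\<^sub>R (VN (Suc m) - VN m)"
    proof -
      have "Lam (Suc m) = Lam m + beta *\<^sub>R D (Suc m)"
        using step_f[rule_format, OF s1, unfolded km] unfolding D_def by simp
      then have "beta *\<^sub>R D (Suc m) = VN (Suc m) - VN m" using LS by (simp add: algebra_simps)
      then show ?thesis using b0 by (metis (no_types) divideR_right order_less_irrefl scaleR_scaleR
          field_class.field_divide_inverse inverse_eq_divide mult_1 not_less_iff_gr_or_eq)
    qed
    have sf: "inner (Lam (Suc m)) (D (Suc m)) = inner (Lam m) (D (Suc m)) + (1/beta)*(norm (VN (Suc m) - VN m))^2"
    proof -
      have "inner (Lam (Suc m)) (D (Suc m)) - inner (Lam m) (D (Suc m)) = inner (VN (Suc m) - VN m) (D (Suc m))"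
        unfolding LS by (simp add: inner_diff_left)
      also have "\<dots> = (1/beta)*(norm (VN (Suc m) - VN m))^2"
        unfolding Dk by (simp add: power2_norm_eq_inner)
      finally show ?thesis by simp
    qed
    have q1: "inner (Lam m) (D (Suc m)) + beta/2*(norm (D (Suc m)))^2
        = beta/2*(norm (D (Suc m) + (1/beta) *\<^sub>R Lam m))^2 - (norm (Lam m))^2/(2*beta)"
      by (rule quad_id[OF b0])
    have q2: "inner (Lam m) (D m) + beta/2*(norm (D m))^2
        = beta/2*(norm (D m + (1/beta) *\<^sub>R Lam m))^2 - (norm (Lam m))^2/(2*beta)"
      by (rule quad_id[OF b0])
    have DD: "D (Suc m) + (1/beta) *\<^sub>R Lam m = WN (Suc m) ** V (Suc m) (N-1) - VN (Suc m) + (1/beta) *\<^sub>R Lam m"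
       "D m + (1/beta) *\<^sub>R Lam m = WN m ** V m (N-1) - VN m + (1/beta) *\<^sub>R Lam m"
      unfolding D_def by auto
    have bb: "(1/beta)*(norm (VN (Suc m) - VN m))^2 \<le> (1+beta)/2*(norm (VN m - VN (Suc m)))^2"
    proof -
      have "1 \<le> beta * beta" using beta mult_mono[of 1 beta 1 beta] by simp
      then have "1/beta \<le> (1+beta)/2" using beta by (simp add: field_simps)
      then have "(1/beta)*(norm (VN m - VN (Suc m)))^2 \<le> (1+beta)/2*(norm (VN m - VN (Suc m)))^2"
        by (rule mult_right_mono) simp
      then show ?thesis by (simp add: norm_minus_commute)
    qed
    have sa_eq: "(\<Sum>i\<in>{1..N-1}. Tm i (W (Suc m) i) (V (Suc m) (i-1)) (V (Suc m) i)) = (\<Sum>i\<in>{1..N-1}. a i)"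
      by (simp add: a_def)
    show ?thesis unfolding L_def sa_eq using sa sb sc ge sf q1[unfolded DD] q2[unfolded DD] bb by linarith
  qed
  define C where "C = L 1"
  have LC: "L k \<le> C" if "k \<ge> 1" for k
    using that
  proof (induction k rule: dec_induct)
    case base then show ?case by (simp add: C_def)
  next
    case (step n) then show ?case using desc[of n] by linarith
  qed
  define SW where "SW = (\<lambda>k. (\<Sum>i\<in>{1..N-1}. (norm (W k i))^2))"
  define ST where "ST = (\<lambda>k. (\<Sum>i\<in>{1..N-1}. Tm i (W k i) (V k (i-1)) (V k i)))"
  have dec: "L k = lam/2*SW k + lam/2*(norm (WN k))^2 + mu/2*ST k
      + (1/2*(norm (Lam k + D k))^2 + (beta-1)/2*(norm (D k))^2)" if "k \<ge> 1" for k
  proof -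
    have "1/2*(norm (Lam k))^2 + inner (Lam k) (D k) + beta/2*(norm (D k))^2
        = 1/2*(norm (Lam k + D k))^2 + (beta-1)/2*(norm (D k))^2" by (rule lb_id)
    then show ?thesis unfolding L_def SW_def ST_def using LamVN[OF that] by simp
  qed
  have SWn: "SW k \<ge> 0" for k unfolding SW_def by (simp add: sum_nonneg)
  have STn: "ST k \<ge> 0" for k unfolding ST_def Tm_def by (simp add: sum_nonneg)
  have C0: "C \<ge> 0"
  proof -
    have "0 \<le> L 1" unfolding dec[OF order_refl] using SWn STn lam mu beta
      by (intro add_nonneg_nonneg mult_nonneg_nonneg) auto
    then show ?thesis using C_def by simp
  qed
  have divb: "x \<le> 2*C/c" if "c > 0" "c/2*x \<le> C" for x c
    using that by (simp add: field_simps)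
  define B where "B = real CARD('d) * real CARD('n) * psi0"
  define s where "s = sqrt (2*C/mu)"
  define wb where "wb = sqrt (2*C/lam)"
  define lb where "lb = sqrt (2*C) + sqrt (2*C/(beta-1))"
  have bnd: "(\<forall>i\<in>{1..N-1}. norm (W k i) \<le> wb) \<and> norm (WN k) \<le> wb
      \<and> (\<forall>i\<le>N-1. norm (V k i) \<le> norm X + real i * (B + s))
      \<and> norm (Lam k) \<le> lb" if k1: "k \<ge> 1" for k
  proof -
    have Lk: "L k \<le> C" using LC[OF k1] .
    note dk = dec[OF k1]
    have p1: "0 \<le> (norm (Lam k + D k))^2" "0 \<le> (norm (D k))^2" "0 \<le> (norm (WN k))^2" by simp_all
    have p2: "0 \<le> 1/2*(norm (Lam k + D k))^2 + (beta-1)/2*(norm (D k))^2" using beta by simp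
    have q: "0 \<le> lam/2*SW k" "0 \<le> lam/2*(norm (WN k))^2" "0 \<le> mu/2*ST k"
      using SWn STn lam mu by simp_all
    have "lam/2*(norm (WN k))^2 \<le> C" using Lk dk q p2 by linarith
    then have "norm (WN k) \<le> wb" unfolding wb_def by (intro real_le_rsqrt divb lam)
    moreover have "norm (W k i) \<le> wb" if hi: "i \<in> {1..N-1}" for i
    proof -
      have "(norm (W k i))^2 \<le> SW k" unfolding SW_def
        by (rule member_le_sum[OF hi]) simp_all
      then have "lam/2*(norm (W k i))^2 \<le> lam/2*SW k" using lam by simp
      then have "lam/2*(norm (W k i))^2 \<le> C" using Lk dk q p2 by linarith
      then show ?thesis unfolding wb_def by (intro real_le_rsqrt divb lam)
    qed
    moreover have Tb: "norm (V k (i-1) + entrywise (sigma i) (W k i ** V k (i-1)) - V k i) \<le> s"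
      if hi: "i \<in> {1..N-1}" for i
    proof -
      have "Tm i (W k i) (V k (i-1)) (V k i) \<le> ST k" unfolding ST_def
        by (rule member_le_sum[OF hi]) (simp_all add: Tm_def)
      then have "mu/2*Tm i (W k i) (V k (i-1)) (V k i) \<le> mu/2*ST k" using mu by simp
      then have "mu/2*Tm i (W k i) (V k (i-1)) (V k i) \<le> C" using Lk dk q p2 by linarith
      then show ?thesis unfolding s_def by (intro real_le_rsqrt divb[OF mu]) (simp add: Tm_def)
    qed
    moreover have "\<forall>i\<le>N-1. norm (V k i) \<le> norm X + real i * (B + s)"
    proof
      fix i show "i \<le> N-1 \<longrightarrow> norm (V k i) \<le> norm X + real i * (B + s)"
      proof (induction i)
        case 0 then show ?case using V0 by simp
      next
        case (Suc j)
        show ?case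
        proof
          assume hj: "Suc j \<le> N-1"
          then have hi: "Suc j \<in> {1..N-1}" by simp
          have IH: "norm (V k j) \<le> norm X + real j * (B + s)" using Suc.IH hj by simp
          have E: "norm (entrywise (sigma (Suc j)) (W k (Suc j) ** V k j)) \<le> B"
            unfolding B_def by (rule entry_bound) (use act hi in blast)
          have R: "norm (V k j + entrywise (sigma (Suc j)) (W k (Suc j) ** V k j) - V k (Suc j)) \<le> s"
            using Tb[OF hi] by simp
          define ee where "ee = entrywise (sigma (Suc j)) (W k (Suc j) ** V k j)"
          define rr where "rr = V k j + ee - V k (Suc j)"
          have vv: "V k (Suc j) = (V k j + ee) - rr" unfolding rr_def by simp
          have t1: "norm ((V k j + ee) - rr) \<le> norm (V k j + ee) + norm rr" by (rule norm_triangle_ineq4)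
          have t2: "norm (V k j + ee) \<le> norm (V k j) + norm ee" by (rule norm_triangle_ineq)
          have "norm (V k (Suc j)) \<le> norm (V k j) + norm (entrywise (sigma (Suc j)) (W k (Suc j) ** V k j))
              + norm (V k j + entrywise (sigma (Suc j)) (W k (Suc j) ** V k j) - V k (Suc j))"
            using t1 t2 unfolding vv by (simp add: ee_def rr_def)
          then show "norm (V k (Suc j)) \<le> norm X + real (Suc j) * (B + s)"
            using IH E R by (simp add: algebra_simps)
        qed
      qed
    qed
    moreover have "norm (Lam k) \<le> lb"
    proof -
      have p3: "0 \<le> (beta-1)/2*(norm (D k))^2" "0 \<le> 1/2*(norm (Lam k + D k))^2" using beta by simp_all
      have "1/2*(norm (Lam k + D k))^2 \<le> C" using Lk dk q p3 by linarith
      then have a1: "norm (Lam k + D k) \<le> sqrt (2*C)" by (intro real_le_rsqrt) simp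
      have "(beta-1)/2*(norm (D k))^2 \<le> C" using Lk dk q p3 by linarith
      then have a2: "norm (D k) \<le> sqrt (2*C/(beta-1))" using beta by (intro real_le_rsqrt divb) simp_all
      have "norm (Lam k) \<le> norm (Lam k + D k) + norm (D k)"
        using norm_triangle_ineq4[of "Lam k + D k" "D k"] by simp
      then show ?thesis unfolding lb_def using a1 a2 by linarith
    qed
    ultimately show ?thesis by blast
  qed
  define Wmax where "Wmax = (\<lambda>i. (if i = N then max wb (norm (WN 0)) else max wb (norm (W 0 i))) + 1)"
  define Vmax where "Vmax = (\<lambda>i. (if i = N then max (lb + norm Y) (norm (VN 0))
      else max (norm X + real i * (B + s)) (norm (V 0 i))) + 1)"
  define lmax where "lmax = max lb 0 + 1"
  show ?thesis
  proof (rule exI[of _ Wmax], rule exI[of _ Vmax], rule exI[of _ lmax], intro conjI)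
    show "\<forall>i\<in>{1..N}. Wmax i > 0 \<and> Vmax i > 0"
      unfolding Wmax_def Vmax_def by (simp add: max_norm_pos)
  next
    show "lmax > 0" unfolding lmax_def by simp
  next
    show "\<forall>k. (\<forall>i\<in>{1..N-1}. norm (W k i) \<le> Wmax i \<and> norm (V k i) \<le> Vmax i)
                \<and> norm (WN k) \<le> Wmax N \<and> norm (VN k) \<le> Vmax N
                \<and> norm (Lam k) \<le> lmax"
    proof (intro allI conjI)
    fix k
    show "\<forall>i\<in>{1..N-1}. norm (W k i) \<le> Wmax i \<and> norm (V k i) \<le> Vmax i"
    proof
      fix i assume hi: "i \<in> {1..N-1}"
      then have iN: "i \<noteq> N" "i \<le> N-1" by auto
      show "norm (W k i) \<le> Wmax i \<and> norm (V k i) \<le> Vmax i"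
      proof (cases "k = 0")
        case True then show ?thesis unfolding Wmax_def Vmax_def using iN by (simp add: le_mp1)
      next
        case False then have "k \<ge> 1" by simp
        from bnd[OF this] hi iN show ?thesis unfolding Wmax_def Vmax_def by (simp add: le_mp2)
      qed
    qed
    show "norm (WN k) \<le> Wmax N"
    proof (cases "k = 0")
      case True then show ?thesis unfolding Wmax_def by (simp add: le_mp1)
    next
      case False then have "k \<ge> 1" by simp
      from bnd[OF this] show ?thesis unfolding Wmax_def by (simp add: le_mp2)
    qed
    show "norm (VN k) \<le> Vmax N"
    proof (cases "k = 0")
      case True then show ?thesis unfolding Vmax_def by (simp add: le_mp1)
    next
      case False then have k1: "k \<ge> 1" by simp
      have "VN k = Lam k + Y" using LamVN[OF k1] by simp
      then have "norm (VN k) \<le> norm (Lam k) + norm Y" by (simp add: norm_triangle_ineq)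
      with bnd[OF k1] show ?thesis unfolding Vmax_def by (simp add: le_mp2)
    qed
    show "norm (Lam k) \<le> lmax"
    proof (cases "k = 0")
      case True then show ?thesis unfolding lmax_def using init_Lam by simp
    next
      case False then have "k \<ge> 1" by simp
      from bnd[OF this] show ?thesis unfolding lmax_def by (simp add: le_mp2)
    qed
    qed
  qed
qed

end
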